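(* Let $\mu$ be Lebesgue measure on $\mathbb{T}^2$, let $\alpha=n/m$ be rational ($n\in\mathbb{Z}$, $m\ge1$) and $\beta\in\mathbb{R}$. Then the measure-preserving system $(\mathbb{T}^2,\phi,\mu)$ is not weakly mixing. If moreover $\beta\in\mathbb{Z}+\alpha\mathbb{Z}$, then $(\mathbb{T}^2,\phi,\mu)$ is not ergodic.
   Context: $\mathbb{T}^2=[0,1)^2$ with addition modulo 1. Define $\theta(q)=1$ for $q\in[0,\tfrac12)$ and $\theta(q)=-1$ for $q\in[\tfrac12,1)$. The triangle map with parameters $(\alpha,\beta)$ is $\phi(q,p)=(q+p+\alpha\theta(q)+\beta,\ p+\alpha\theta(q)+\beta)\pmod 1$; it is a bijection preserving $\mu$. *)

theory Defs
  imports "HOL-Analysis.Analysis"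
begin

text \<open>The torus [0,1)^2, with addition modulo 1 realised by frac.\<close>
definition torus2 :: "(real \<times> real) set" where
  "torus2 = {0..<1} \<times> {0..<1}"

definition mu_T2 :: "(real \<times> real) measure" where
  "mu_T2 = restrict_space lborel torus2"

definition theta :: "real \<Rightarrow> real" where
  "theta q = (if 0 \<le> q \<and> q < 1/2 then 1 else -1)"

definition triangle_map :: "real \<Rightarrow> real \<Rightarrow> real \<times> real \<Rightarrow> real \<times> real" where
  "triangle_map \<alpha> \<beta> x = (case x of (q, p) \<Rightarrow>
     (frac (q + p + \<alpha> * theta q + \<beta>), frac (p + \<alpha> * theta q + \<beta>)))"

definition ergodic :: "'a measure \<Rightarrow> ('a \<Rightarrow> 'a) \<Rightarrow> bool" where
  "ergodic M T \<longleftrightarrow>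
     (\<forall>A\<in>sets M. T -` A \<inter> space M = A \<longrightarrow> measure M A = 0 \<or> measure M A = 1)"

definition weakly_mixing :: "'a measure \<Rightarrow> ('a \<Rightarrow> 'a) \<Rightarrow> bool" where
  "weakly_mixing M T \<longleftrightarrow>
     (\<forall>A\<in>sets M. \<forall>B\<in>sets M.
        (\<lambda>N. (\<Sum>n<N. \<bar>measure M ((T ^^ n) -` A \<inter> space M \<inter> B)
                        - measure M A * measure M B\<bar>) / real N) \<longlonglongrightarrow> 0)"

end

theory Submission
  imports Defs
begin

lemma borel_measurable_frac[measurable]: "(frac :: real \<Rightarrow> real) \<in> borel_measurable borel"
proof -
  have "frac = (\<lambda>x::real. x - real_of_int \<lfloor>x\<rfloor>)" by (rule ext) (simp add: frac_def)
  moreover have "(\<lambda>x::real. x - real_of_int \<lfloor>x\<rfloor>) \<in> borel_measurable borel"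
    using borel_measurable_real_floor by measurable
  ultimately show ?thesis by (simp only:)
qed

lemma nn_translate:
  fixes F :: "real \<Rightarrow> ennreal"
  assumes [measurable]: "F \<in> borel_measurable borel"
  shows "(\<integral>\<^sup>+x. F x \<partial>lborel) = (\<integral>\<^sup>+x. F (t + x) \<partial>lborel)"
  using nn_integral_real_affine[OF assms, of 1 t] by simp

lemma J_shift:
  fixes g :: "real \<Rightarrow> ennreal"
  assumes [measurable]: "g \<in> borel_measurable borel"
  shows "(\<integral>\<^sup>+x. g (frac x) * indicator {a..<a+1} x \<partial>lborel)
       = (\<integral>\<^sup>+x. g (frac x) * indicator {0..<1} x \<partial>lborel)"
proof -
  define a0 where "a0 = frac a"
  define k where "k = \<lfloor>a\<rfloor>"
  have a: "a = of_int k + a0" by (simp add: a0_def k_def frac_def)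
  have a0: "0 \<le> a0" "a0 < 1" by (auto simp: a0_def frac_lt_1)
  have "(\<integral>\<^sup>+x. g (frac x) * indicator {a..<a+1} x \<partial>lborel)
      = (\<integral>\<^sup>+x. g (frac (of_int k + x)) * indicator {a..<a+1} (of_int k + x) \<partial>lborel)"
    by (rule nn_translate) measurable
  also have "\<dots> = (\<integral>\<^sup>+x. g (frac x) * indicator {a0..<1} x + g (frac x) * indicator {1..<1+a0} x \<partial>lborel)"
    by (rule nn_integral_cong) (use a0 in \<open>auto simp: a indicator_def\<close>)
  also have "\<dots> = (\<integral>\<^sup>+x. g (frac x) * indicator {a0..<1} x \<partial>lborel) + (\<integral>\<^sup>+x. g (frac x) * indicator {1..<1+a0} x \<partial>lborel)"
    by (rule nn_integral_add) measurable
  also have "(\<integral>\<^sup>+x. g (frac x) * indicator {1..<1+a0} x \<partial>lborel)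
      = (\<integral>\<^sup>+x. g (frac (1 + x)) * indicator {1..<1+a0} (1 + x) \<partial>lborel)"
    by (rule nn_translate) measurable
  also have "\<dots> = (\<integral>\<^sup>+x. g (frac x) * indicator {0..<a0} x \<partial>lborel)"
    by (rule nn_integral_cong) (auto simp: indicator_def frac_1_eq add.commute[of 1])
  also have "(\<integral>\<^sup>+x. g (frac x) * indicator {a0..<1} x \<partial>lborel) + \<dots>
      = (\<integral>\<^sup>+x. g (frac x) * indicator {a0..<1} x + g (frac x) * indicator {0..<a0} x \<partial>lborel)"
    by (rule nn_integral_add[symmetric]) measurable
  also have "\<dots> = (\<integral>\<^sup>+x. g (frac x) * indicator {0..<1} x \<partial>lborel)"
    by (rule nn_integral_cong) (use a0 in \<open>auto simp: indicator_def\<close>)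
  finally show ?thesis .
qed

lemma J_sum:
  fixes g :: "real \<Rightarrow> ennreal"
  assumes [measurable]: "g \<in> borel_measurable borel"
  shows "(\<integral>\<^sup>+x. g (frac x) * indicator {c..<c + real m} x \<partial>lborel)
       = of_nat m * (\<integral>\<^sup>+x. g (frac x) * indicator {0..<1} x \<partial>lborel)"
proof (induction m)
  case 0 then show ?case by simp
next
  case (Suc m)
  have "(\<integral>\<^sup>+x. g (frac x) * indicator {c..<c + real (Suc m)} x \<partial>lborel)
     = (\<integral>\<^sup>+x. g (frac x) * indicator {c..<c + real m} x + g (frac x) * indicator {c + real m..<c + real m + 1} x \<partial>lborel)"
    by (rule nn_integral_cong) (auto simp: indicator_def)
  also have "\<dots> = (\<integral>\<^sup>+x. g (frac x) * indicator {c..<c + real m} x \<partial>lborel) + (\<integral>\<^sup>+x. g (frac x) * indicator {c + real m..<c + real m + 1} x \<partial>lborel)"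
    by (rule nn_integral_add) measurable
  also have "\<dots> = of_nat (Suc m) * (\<integral>\<^sup>+x. g (frac x) * indicator {0..<1} x \<partial>lborel)"
    using Suc J_shift[OF assms, of "c + real m"] by (simp add: distrib_right)
  finally show ?case .
qed

lemma J_scale:
  fixes g :: "real \<Rightarrow> ennreal"
  assumes [measurable]: "g \<in> borel_measurable borel" and m: "m \<ge> 1"
  shows "(\<integral>\<^sup>+p. g (frac (real m * p + c)) * indicator {0..<1} p \<partial>lborel)
       = (\<integral>\<^sup>+x. g (frac x) * indicator {0..<1} x \<partial>lborel)"
proof -
  let ?L = "(\<integral>\<^sup>+p. g (frac (real m * p + c)) * indicator {0..<1} p \<partial>lborel)"
  let ?J = "(\<integral>\<^sup>+x. g (frac x) * indicator {0..<1} x \<partial>lborel)"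
  have f: "(\<lambda>x. g (frac x) * indicator {c..<c + real m} x) \<in> borel_measurable borel" by measurable
  have "of_nat m * ?J = (\<integral>\<^sup>+x. g (frac x) * indicator {c..<c + real m} x \<partial>lborel)"
    using J_sum[OF assms(1)] by simp
  also have "\<dots> = ennreal \<bar>real m\<bar> * (\<integral>\<^sup>+p. g (frac (c + real m * p)) * indicator {c..<c + real m} (c + real m * p) \<partial>lborel)"
    using nn_integral_real_affine[OF f, of "real m" c] m by simp
  also have "(\<integral>\<^sup>+p. g (frac (c + real m * p)) * indicator {c..<c + real m} (c + real m * p) \<partial>lborel) = ?L"
    using m by (intro nn_integral_cong) (auto simp: indicator_def add.commute zero_le_mult_iff)
  finally have "of_nat m * ?J = of_nat m * ?L"
    by (simp add: ennreal_of_nat_eq_real_of_nat)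
  then have "of_nat m * ?J / of_nat m = of_nat m * ?L / of_nat m" by simp
  moreover have nz: "of_nat m \<noteq> (0::ennreal)" "of_nat m \<noteq> (top::ennreal)" using m by auto
  ultimately show ?thesis
    by (simp only: mult.commute[of "of_nat m"] ennreal_mult_divide_eq[OF nz])
qed

lemma torus2_borel[measurable]: "torus2 \<in> sets (borel :: (real \<times> real) measure)"
proof -
  show ?thesis
    unfolding torus2_def by (rule borel_Times) auto
qed

lemma space_mu: "space mu_T2 = torus2"
  by (simp add: mu_T2_def space_restrict_space)

lemma sets_mu: "A \<in> sets mu_T2 \<longleftrightarrow> A \<subseteq> torus2 \<and> A \<in> sets borel"
  unfolding mu_T2_def by (subst sets_restrict_space_iff) auto

lemma emeasure_mu: "A \<subseteq> torus2 \<Longrightarrow> emeasure mu_T2 A = emeasure lborel A"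
  unfolding mu_T2_def by (rule emeasure_restrict_space) auto

lemma mu_frac:
  assumes m: "m \<ge> 1" and X[measurable]: "X \<in> sets borel"
  shows "emeasure mu_T2 {x\<in>torus2. frac (real m * snd x + c) \<in> X} = emeasure lborel (X \<inter> {0..<1::real})"
proof -
  define S where "S = {p\<in>{0..<1::real}. frac (real m * p + c) \<in> X}"
  have S[measurable]: "S \<in> sets borel" unfolding S_def by measurable
  have eq: "{x\<in>torus2. frac (real m * snd x + c) \<in> X} = {0..<1} \<times> S"
    by (auto simp: torus2_def S_def)
  have "emeasure mu_T2 ({0..<1} \<times> S) = emeasure lborel ({0..<1::real} \<times> S)"
    by (rule emeasure_mu) (auto simp: torus2_def S_def)
  also have "\<dots> = emeasure (lborel \<Otimes>\<^sub>M lborel) ({0..<1::real} \<times> S)"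
    by (simp add: lborel_prod)
  also have "\<dots> = emeasure lborel {0..<1::real} * emeasure lborel S"
    by (rule sigma_finite_measure.emeasure_pair_measure_Times[OF sigma_finite_lborel]) auto
  also have "\<dots> = emeasure lborel S" by simp
  also have "\<dots> = (\<integral>\<^sup>+p. indicator X (frac (real m * p + c)) * indicator {0..<1} p \<partial>lborel)"
    by (subst nn_integral_indicator[symmetric]) (auto intro!: nn_integral_cong simp: S_def indicator_def simp del: nn_integral_indicator)
  also have "\<dots> = (\<integral>\<^sup>+x. indicator X (frac x) * indicator {0..<1} x \<partial>lborel)"
    by (rule J_scale[OF _ m]) measurable
  also have "\<dots> = emeasure lborel (X \<inter> {0..<1::real})"
    by (subst nn_integral_indicator[symmetric]) (auto intro!: nn_integral_cong simp: indicator_def simp del: nn_integral_indicator)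
  finally show ?thesis using eq by simp
qed

lemma frac_mult_frac: "frac (real m * frac w) = frac (real m * w)"
proof -
  have "real m * frac w = real m * w + of_int (- (int m * \<lfloor>w\<rfloor>))"
    by (simp add: frac_def algebra_simps)
  then show ?thesis by (simp only: frac_add_of_int_right)
qed

lemma T_torus: "triangle_map a b x \<in> torus2"
  by (auto simp: triangle_map_def torus2_def frac_lt_1 split: prod.splits)

lemma Tpow_torus: "x \<in> torus2 \<Longrightarrow> (triangle_map a b ^^ k) x \<in> torus2"
  by (cases k) (auto simp: T_torus)

lemma dyn:
  assumes m: "m \<ge> 1" and al: "\<alpha> = of_int n / real m"
  shows "frac (real m * snd ((triangle_map \<alpha> \<beta> ^^ k) x)) = frac (real m * snd x + real k * (real m * \<beta>))"
proof (induction k)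
  case 0 then show ?case by simp
next
  case (Suc k)
  define y where "y = (triangle_map \<alpha> \<beta> ^^ k) x"
  have ma: "real m * \<alpha> = of_int n" using m al by simp
  have th: "real m * (\<alpha> * theta (fst y)) = of_int (if 0 \<le> fst y \<and> fst y < 1/2 then n else - n)"
    using ma by (simp add: theta_def)
  have "frac (real m * snd ((triangle_map \<alpha> \<beta> ^^ Suc k) x))
      = frac (real m * frac (snd y + \<alpha> * theta (fst y) + \<beta>))"
    by (simp add: y_def triangle_map_def split: prod.splits)
  also have "\<dots> = frac (real m * (snd y + \<alpha> * theta (fst y) + \<beta>))" by (rule frac_mult_frac)
  also have "real m * (snd y + \<alpha> * theta (fst y) + \<beta>) = (real m * snd y + real m * \<beta>) + real m * (\<alpha> * theta (fst y))"
    by (simp add: algebra_simps)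
  also have "frac \<dots> = frac (real m * snd y + real m * \<beta>)" by (simp only: th frac_add_of_int_right)
  also have "\<dots> = frac (frac (real m * snd y) + real m * \<beta>)" by simp
  also have "\<dots> = frac (real m * snd x + real (Suc k) * (real m * \<beta>))"
    using Suc by (simp add: y_def algebra_simps)
  finally show ?case .
qed

definition Aset :: "nat \<Rightarrow> real \<Rightarrow> real set \<Rightarrow> (real \<times> real) set" where
  "Aset m c X = {x\<in>torus2. frac (real m * snd x + c) \<in> X}"

lemma Aset_sets:
  assumes [measurable]: "X \<in> sets borel" shows "Aset m c X \<in> sets mu_T2"
proof -
  have "Measurable.pred (borel \<Otimes>\<^sub>M borel) (\<lambda>x::real\<times>real. frac (real m * snd x + c) \<in> X)" by measurable
  then have "{x::real\<times>real. frac (real m * snd x + c) \<in> X} \<in> sets (borel \<Otimes>\<^sub>M borel)"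
    by (simp add: pred_def space_pair_measure)
  then have "{x::real\<times>real. frac (real m * snd x + c) \<in> X} \<in> sets borel" by (metis borel_prod)
  then have "torus2 \<inter> {x::real\<times>real. frac (real m * snd x + c) \<in> X} \<in> sets borel"
    using torus2_borel by (rule sets.Int[rotated])
  moreover have "Aset m c X = torus2 \<inter> {x::real\<times>real. frac (real m * snd x + c) \<in> X}"
    by (auto simp: Aset_def)
  ultimately show ?thesis by (simp add: sets_mu)
qed

lemma Aset_sub: "Aset m c X \<subseteq> torus2" by (auto simp: Aset_def)

lemma Aset_half: "m \<ge> 1 \<Longrightarrow> measure mu_T2 (Aset m c {..<1/2}) = 1/2"
proof -
  assume m: "m \<ge> 1"
  have e: "{..<1/2} \<inter> {0..<1::real} = {0..<1/2}" by auto
  have "measure mu_T2 (Aset m c {..<1/2}) = enn2real (emeasure lborel ({0..<1/2}::real set))"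
    unfolding measure_def Aset_def using m by (subst mu_frac) (auto simp: e)
  also have "\<dots> = measure lborel ({0..<1/2}::real set)" by (simp only: measure_def)
  also have "\<dots> = 1/2" by simp
  finally show ?thesis .
qed

lemma Aset_38: "m \<ge> 1 \<Longrightarrow> measure mu_T2 (Aset m c {1/16..7/16}) = 3/8"
proof -
  assume m: "m \<ge> 1"
  have e: "{1/16..7/16} \<inter> {0..<1::real} = {1/16..7/16}" by auto
  have "measure mu_T2 (Aset m c {1/16..7/16}) = enn2real (emeasure lborel ({1/16..7/16}::real set))"
    unfolding measure_def Aset_def using m by (subst mu_frac) (auto simp: e)
  also have "\<dots> = measure lborel ({1/16..7/16}::real set)" by (simp only: measure_def)
  also have "\<dots> = 3/8" by simp
  finally show ?thesis .
qed

lemma preimg: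
  assumes m: "m \<ge> 1" and al: "\<alpha> = of_int n / real m"
  shows "(triangle_map \<alpha> \<beta> ^^ k) -` Aset m 0 X \<inter> space mu_T2 = Aset m (real k * (real m * \<beta>)) X"
  using dyn[OF m al] Tpow_torus
  by (auto simp: Aset_def space_mu)

lemma Jc: "\<exists>j\<le>(8::nat). \<forall>z. frac (z + real j / 8) \<in> {1/16..7/16} \<longrightarrow> frac (z + t) < 1/2"
proof -
  define f where "f = frac t"
  have f: "0 \<le> f" "f < 1" by (auto simp: f_def frac_lt_1)
  define ji where "ji = \<lfloor>8 * f + 1/2\<rfloor>"
  have ji: "real_of_int ji \<le> 8 * f + 1/2" "8 * f + 1/2 < real_of_int ji + 1"
    unfolding ji_def by linarith+
  have ji0: "ji \<ge> 0" using ji f by linarith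
  have ji8: "ji \<le> 8" using ji f by linarith
  define j where "j = nat ji"
  have jj: "real j = real_of_int ji" using ji0 by (simp add: j_def)
  define d where "d = f - real j / 8"
  have d: "-1/16 \<le> d" "d < 1/16" using ji jj unfolding d_def by (simp_all add: field_simps)
  show ?thesis
  proof (intro exI conjI allI impI)
    show "j \<le> 8" using ji8 ji0 by (simp add: j_def)
    fix z assume y: "frac (z + real j / 8) \<in> {1/16..7/16}"
    have "z + t = (z + real j / 8) + d + of_int \<lfloor>t\<rfloor>"
      by (simp add: d_def f_def frac_def)
    then have "frac (z + t) = frac ((z + real j / 8 + d) + of_int \<lfloor>t\<rfloor>)" by (simp add: add.assoc)
    also have "\<dots> = frac (frac (z + real j / 8) + d)" by (simp only: frac_add_of_int_right frac_add_simps)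
    also have "\<dots> = frac (z + real j / 8) + d"
      using y d by (intro frac_eq_id) auto
    finally show "frac (z + t) < 1/2" using y d by simp
  qed
qed

lemma Aset_UNIV: "Aset m 0 UNIV = torus2" by (auto simp: Aset_def)

lemma fin_mu: "finite_measure mu_T2"
proof (rule finite_measureI)
  have "emeasure mu_T2 (Aset 1 0 UNIV) = emeasure lborel (UNIV \<inter> {0..<1::real})"
    unfolding Aset_def by (rule mu_frac) auto
  then show "emeasure mu_T2 (space mu_T2) \<noteq> \<infinity>"
    by (simp add: Aset_UNIV space_mu)
qed

lemma Aset_shift_int:
  assumes "c' = c + of_int i" shows "Aset m c' X = Aset m c X"
proof -
  have h: "frac (real m * snd x + c') = frac (real m * snd x + c)" for x
    using assms by (simp add: add.assoc[symmetric])
  show ?thesis unfolding Aset_def h by (rule refl)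
qed

theorem corollary1:
  fixes n :: int and m :: nat and \<alpha> \<beta> :: real
  assumes "m \<ge> 1" and "\<alpha> = of_int n / of_nat m"
  shows "\<not> weakly_mixing mu_T2 (triangle_map \<alpha> \<beta>) \<and>
         ((\<exists>k l :: int. \<beta> = of_int k + \<alpha> * of_int l) \<longrightarrow> \<not> ergodic mu_T2 (triangle_map \<alpha> \<beta>))"
proof
  have m: "m \<ge> 1" and al: "\<alpha> = of_int n / real m" using assms by auto
  interpret F: finite_measure mu_T2 by (rule fin_mu)
  define T where "T = triangle_map \<alpha> \<beta>"
  define A where "A = Aset m 0 {..<1/2}"
  define B where "B j = Aset m (real j / 8) {..<1/2}" for j :: nat
  define D where "D j k = \<bar>measure mu_T2 ((T ^^ k) -` A \<inter> space mu_T2 \<inter> B j)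
                        - measure mu_T2 A * measure mu_T2 (B j)\<bar>" for j k :: nat
  have mA: "measure mu_T2 A = 1/2" unfolding A_def by (rule Aset_half[OF m])
  have mB: "measure mu_T2 (B j) = 1/2" for j unfolding B_def by (rule Aset_half[OF m])
  have A_sets: "A \<in> sets mu_T2" unfolding A_def by (rule Aset_sets) auto
  have D0: "D j k \<ge> 0" for j k by (simp add: D_def)
  have low: "\<exists>j\<le>8. D j k \<ge> 1/8" for k
  proof -
    obtain j where j: "j \<le> 8" and jz: "\<And>z. frac (z + real j / 8) \<in> {1/16..7/16} \<Longrightarrow> frac (z + real k * (real m * \<beta>)) < 1/2"
      using Jc[of "real k * (real m * \<beta>)"] by blast
    have pre: "(T ^^ k) -` A \<inter> space mu_T2 = Aset m (real k * (real m * \<beta>)) {..<1/2}"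
      unfolding T_def A_def by (rule preimg[OF m al])
    have sub: "Aset m (real j / 8) {1/16..7/16} \<subseteq> (T ^^ k) -` A \<inter> space mu_T2 \<inter> B j"
      unfolding pre B_def using jz by (auto simp: Aset_def)
    have "3/8 \<le> measure mu_T2 ((T ^^ k) -` A \<inter> space mu_T2 \<inter> B j)"
    proof -
      have "measure mu_T2 (Aset m (real j / 8) {1/16..7/16}) \<le> measure mu_T2 ((T ^^ k) -` A \<inter> space mu_T2 \<inter> B j)"
        using sub by (intro F.finite_measure_mono) (auto simp: pre B_def intro!: Aset_sets)
      then show ?thesis using Aset_38[OF m] by simp
    qed
    then have "D j k \<ge> 1/8" unfolding D_def mA mB by simp
    then show ?thesis using j by blast
  qed
  have sumlow: "(\<Sum>j\<le>8. (\<Sum>k<N. D j k) / real N) \<ge> 1/8" if N: "N \<ge> 1" for N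
  proof -
    have "(\<Sum>j\<le>8. (\<Sum>k<N. D j k) / real N) = (\<Sum>k<N. \<Sum>j\<le>8. D j k) / real N"
      by (simp add: sum_divide_distrib[symmetric] sum.swap[of _ "{..8::nat}"])
    also have "(\<Sum>k<N. \<Sum>j\<le>8. D j k) \<ge> (\<Sum>k<N. 1/8)"
    proof (rule sum_mono)
      fix k
      obtain j where "j \<le> 8" "D j k \<ge> 1/8" using low by blast
      then have "D j k \<le> (\<Sum>j\<le>8. D j k)"
        by (intro member_le_sum) (auto simp: D0)
      with \<open>D j k \<ge> 1/8\<close> show "1/8 \<le> (\<Sum>j\<le>8. D j k)" by linarith
    qed
    then have "(\<Sum>k<N. \<Sum>j\<le>8. D j k) / real N \<ge> (real N / 8) / real N"
      using N by (intro divide_right_mono) auto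
    finally show ?thesis using N by simp
  qed
  show "\<not> weakly_mixing mu_T2 (triangle_map \<alpha> \<beta>)"
  proof
    assume wm: "weakly_mixing mu_T2 (triangle_map \<alpha> \<beta>)"
    have "(\<lambda>N. (\<Sum>k<N. D j k) / real N) \<longlonglongrightarrow> 0" for j
    proof -
      have "B j \<in> sets mu_T2" unfolding B_def by (rule Aset_sets) auto
      then show ?thesis using wm A_sets unfolding weakly_mixing_def D_def T_def by blast
    qed
    then have "(\<lambda>N. \<Sum>j\<le>8. (\<Sum>k<N. D j k) / real N) \<longlonglongrightarrow> (\<Sum>j\<le>(8::nat). 0)"
      by (intro tendsto_sum) auto
    then have "1/8 \<le> (\<Sum>j\<le>(8::nat). (0::real))"
      by (rule LIMSEQ_le_const) (use sumlow in auto)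
    then show False by simp
  qed
  show "(\<exists>k l :: int. \<beta> = of_int k + \<alpha> * of_int l) \<longrightarrow> \<not> ergodic mu_T2 (triangle_map \<alpha> \<beta>)"
  proof (intro impI notI)
    assume "\<exists>k l :: int. \<beta> = of_int k + \<alpha> * of_int l"
    then obtain k l :: int where b: "\<beta> = of_int k + \<alpha> * of_int l" by blast
    have "real m * \<beta> = of_int (int m * k + n * l)" using m by (simp add: b al algebra_simps)
    then have "real 1 * (real m * \<beta>) = 0 + of_int (int m * k + n * l)" by simp
    then have sh: "Aset m (real 1 * (real m * \<beta>)) {..<1/2} = Aset m 0 {..<1/2}"
      by (rule Aset_shift_int)
    have "(T ^^ 1) -` A \<inter> space mu_T2 = A"
      unfolding T_def A_def preimg[OF m al] sh ..
    then have inv: "T -` A \<inter> space mu_T2 = A" by simp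
    assume "ergodic mu_T2 (triangle_map \<alpha> \<beta>)"
    then have "measure mu_T2 A = 0 \<or> measure mu_T2 A = 1"
      using A_sets inv unfolding ergodic_def T_def by blast
    then show False using mA by simp
  qed
qed

end
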